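(* There is an absolute constant $C$ such that for every odd positive integer $d$ and every $\tau\in[0,d^{1/6}]$ (possibly depending on $d$), $$\int_0^\tau\frac{|H_d(t)|}{t}\,dt\le C\,d^{1/4}\,\tau\,e^{\tau^2/4}.$$
   Context: The Hermite polynomials $(H_k)_{k\ge0}$ are the orthonormal polynomials for $\mathcal{N}(0,1)$ with $\deg H_k=k$ and positive leading coefficient (the probabilist's Hermite polynomials divided by $\sqrt{k!}$). *)

theory Defs
  imports "HOL-Analysis.Analysis"
begin

fun hermite_prob :: "nat \<Rightarrow> real \<Rightarrow> real" where
  "hermite_prob 0 x = 1"
| "hermite_prob (Suc 0) x = x"
| "hermite_prob (Suc (Suc k)) x = x * hermite_prob (Suc k) x - real (Suc k) * hermite_prob k x"

text \<open>Orthonormal Hermite polynomials for N(0,1): H_k = He_k / sqrt(k!).\<close>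
definition hermite :: "nat \<Rightarrow> real \<Rightarrow> real" where
  "hermite k x = hermite_prob k x / sqrt (fact k)"

end

theory Submission
  imports Defs
begin

lemma He_rec: "hermite_prob (Suc k) x = x * hermite_prob k x - real k * hermite_prob (k - 1) x"
  by (cases k) auto

lemma He_deriv: "(hermite_prob n has_real_derivative (real n * hermite_prob (n - 1) x)) (at x)"
proof (induction n x rule: hermite_prob.induct)
  case (1 x) then show ?case by simp
next
  case (2 x) then show ?case by simp
next
  case (3 k x)
  have d: "((\<lambda>x. x * hermite_prob (Suc k) x - real (Suc k) * hermite_prob k x) has_real_derivative
      (1 * hermite_prob (Suc k) x + x * (real (Suc k) * hermite_prob k x)
       - real (Suc k) * (real k * hermite_prob (k - 1) x))) (at x)"
  proof -
    have a: "(hermite_prob (Suc k) has_real_derivative (real (Suc k) * hermite_prob k x)) (at x)"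
      using 3(1) by simp
    have b: "(hermite_prob k has_real_derivative (real k * hermite_prob (k - 1) x)) (at x)"
      using 3(2) by simp
    show ?thesis
      using DERIV_diff[OF DERIV_mult[OF DERIV_ident a] DERIV_cmult[OF b, of "real (Suc k)"]] by (simp add: mult.commute)
  qed
  have "1 * hermite_prob (Suc k) x + x * (real (Suc k) * hermite_prob k x)
       - real (Suc k) * (real k * hermite_prob (k - 1) x)
     = real (Suc (Suc k)) * hermite_prob (Suc k) x"
    unfolding He_rec[of k x] by (simp add: algebra_simps)
  moreover have "hermite_prob (Suc (Suc k)) = (\<lambda>x. x * hermite_prob (Suc k) x - real (Suc k) * hermite_prob k x)"
    by (rule ext) simp
  ultimately show ?case using d by simp
qed


lemma z_deriv:
  assumes "n \<ge> 1"
  shows "(hermite_prob (n - 1) has_real_derivative (x * hermite_prob (n - 1) x - hermite_prob n x)) (at x)"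
proof -
  obtain k where k: "n = Suc k" using assms by (cases n) auto
  have "hermite_prob (Suc k) x = x * hermite_prob k x - real k * hermite_prob (k - 1) x"
    by (rule He_rec)
  then have "real k * hermite_prob (k - 1) x = x * hermite_prob k x - hermite_prob (Suc k) x"
    by simp
  then show ?thesis using He_deriv[of k x] k by simp
qed

lemma u_deriv:
  shows "((\<lambda>x. exp (-(x^2)/4) * hermite_prob n x) has_real_derivative
     (exp (-(x^2)/4) * (real n * hermite_prob (n - 1) x - x * hermite_prob n x / 2))) (at x)"
  using He_deriv[of n x]
  by (auto intro!: derivative_eq_intros simp: algebra_simps)

lemma v_deriv:
  assumes "n \<ge> 1"
  shows "((\<lambda>x. exp (-(x^2)/4) * (real n * hermite_prob (n - 1) x - x * hermite_prob n x / 2)) has_real_derivative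
     (-(real n + 1/2 - x^2/4) * (exp (-(x^2)/4) * hermite_prob n x))) (at x)"
proof -
  have e: "((\<lambda>x. exp (-(x^2)/4)) has_real_derivative (-(x/2) * exp (-(x^2)/4))) (at x)"
    by (auto intro!: derivative_eq_intros simp: algebra_simps)
  have w: "((\<lambda>x. real n * hermite_prob (n - 1) x - x * hermite_prob n x / 2) has_real_derivative
      (real n * (x * hermite_prob (n - 1) x - hermite_prob n x) - (1 * hermite_prob n x + x * (real n * hermite_prob (n - 1) x)) / 2)) (at x)"
    using He_deriv[of n x] z_deriv[OF assms, of x] DERIV_mult[OF DERIV_ident He_deriv[of n x]]
    by (intro DERIV_diff DERIV_cmult DERIV_cdivide DERIV_mult DERIV_ident) (auto simp: mult.commute mult.left_commute)
  show ?thesis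
    by (rule DERIV_cong[OF DERIV_mult[OF e w]]) (simp add: algebra_simps power2_eq_square)
qed

definition uf :: "nat \<Rightarrow> real \<Rightarrow> real" where
  "uf n x = exp (-(x^2)/4) * hermite_prob n x"
definition vf :: "nat \<Rightarrow> real \<Rightarrow> real" where
  "vf n x = exp (-(x^2)/4) * (real n * hermite_prob (n - 1) x - x * hermite_prob n x / 2)"
definition En :: "nat \<Rightarrow> real \<Rightarrow> real" where
  "En n x = (real n + 1/2 - x^2/4) * (uf n x)^2 + (vf n x)^2"

lemma uf_deriv: "(uf n has_real_derivative vf n x) (at x)"
  using u_deriv[of n x] unfolding uf_def[abs_def] vf_def by simp

lemma vf_deriv: "n \<ge> 1 \<Longrightarrow> (vf n has_real_derivative (-(real n + 1/2 - x^2/4) * uf n x)) (at x)"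
  using v_deriv[of n x] unfolding uf_def vf_def[abs_def] by simp

lemma En_deriv:
  assumes "n \<ge> 1"
  shows "(En n has_real_derivative (-(x/2) * (uf n x)^2)) (at x)"
proof -
  have q: "((\<lambda>x. real n + 1/2 - x^2/4) has_real_derivative (-(x/2))) (at x)"
    by (auto intro!: derivative_eq_intros)
  have u2: "((\<lambda>x. (uf n x)^2) has_real_derivative (2 * uf n x * vf n x)) (at x)"
    using DERIV_mult[OF uf_deriv[of n x] uf_deriv[of n x]]
    by (simp add: power2_eq_square algebra_simps)
  have v2: "((\<lambda>x. (vf n x)^2) has_real_derivative (2 * vf n x * (-(real n + 1/2 - x^2/4) * uf n x))) (at x)"
    using DERIV_mult[OF vf_deriv[OF assms, of x] vf_deriv[OF assms, of x]]
    by (simp add: power2_eq_square algebra_simps)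
  show ?thesis
    unfolding En_def[abs_def]
    by (rule DERIV_cong[OF DERIV_add[OF DERIV_mult[OF q u2] v2]]) (simp add: algebra_simps power2_eq_square)
qed

lemma He_odd_zero: "hermite_prob (2*k+1) 0 = 0"
proof (induction k)
  case 0 then show ?case by simp
next
  case (Suc k)
  have "2 * Suc k + 1 = Suc (Suc (2*k+1))" by simp
  then show ?case using Suc by (simp del: mult_Suc_right)
qed

lemma pointwise:
  assumes n: "n \<ge> 1" and z: "hermite_prob n 0 = 0" and t: "0 \<le> t" "t^2 \<le> 4 * real n + 2"
  shows "(uf n t)^2 \<le> t^2 * (real n * hermite_prob (n - 1) 0)^2"
proof (cases "t = 0")
  case True then show ?thesis using z by (simp add: uf_def)
next
  case False
  then have tp: "0 < t" using t by simp
  obtain \<xi> where xi: "0 < \<xi>" "\<xi> < t" "uf n t - uf n 0 = (t - 0) * vf n \<xi>"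
    using MVT2[OF tp, of "uf n" "vf n"] uf_deriv by blast
  have u0: "uf n 0 = 0" using z by (simp add: uf_def)
  have ut: "(uf n t)^2 = t^2 * (vf n \<xi>)^2" using xi(3) u0 by (simp add: power_mult_distrib)
  have "\<xi>^2 \<le> t^2" using xi by (intro power_mono) auto
  then have q: "0 \<le> real n + 1/2 - \<xi>^2/4" using t by simp
  have "(vf n \<xi>)^2 \<le> En n \<xi>" unfolding En_def using q by simp
  also have "En n \<xi> \<le> En n 0"
  proof (rule DERIV_nonpos_imp_nonincreasing[of 0 \<xi> "En n"])
    show "0 \<le> \<xi>" using xi by simp
    show "\<And>x. 0 \<le> x \<Longrightarrow> x \<le> \<xi> \<Longrightarrow> \<exists>y. DERIV (En n) x :> y \<and> y \<le> 0"
      using En_deriv[OF n] by (metis mult_nonneg_nonneg neg_le_0_iff_le zero_le_divide_iff zero_le_numeral zero_le_power2 mult_minus_left)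
  qed
  also have "En n 0 = (real n * hermite_prob (n - 1) 0)^2"
    using z by (simp add: En_def uf_def vf_def)
  finally have "(vf n \<xi>)^2 \<le> (real n * hermite_prob (n - 1) 0)^2" .
  then show ?thesis unfolding ut by (intro mult_left_mono) auto
qed

lemma He_even_rec: "hermite_prob (2 * Suc k) 0 = - real (2*k+1) * hermite_prob (2*k) 0"
proof -
  have "2 * Suc k = Suc (Suc (2*k))" by simp
  then show ?thesis by (simp add: algebra_simps)
qed

lemma aux_frac: "(F::real) > 0 \<Longrightarrow> c > 0 \<Longrightarrow> (- c * H)^2 / ((c + 1) * c * F) = c / (c + 1) * (H^2 / F)"
proof -
  assume a: "F > 0" "c > 0"
  then have "F \<noteq> 0" "c \<noteq> 0" "c + 1 \<noteq> 0" by auto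
  have "(- c * H)^2 / ((c + 1) * c * F) = (c * (c * H^2)) / (c * ((c+1) * F))"
    by (simp add: power_mult_distrib power2_eq_square mult.commute mult.left_commute)
  also have "\<dots> = (c * H^2) / ((c+1) * F)" using \<open>c \<noteq> 0\<close> by simp
  also have "\<dots> = c / (c + 1) * (H^2 / F)" by simp
  finally show ?thesis .
qed

lemma wallis: "(hermite_prob (2*k) 0 ^ 2 / fact (2*k))^2 * real (2*k+1) \<le> 1"
proof (induction k)
  case 0 then show ?case by simp
next
  case (Suc k)
  define r where "r = hermite_prob (2*k) 0 ^ 2 / fact (2*k)"
  have r0: "0 \<le> r" unfolding r_def by simp
  have f: "fact (2 * Suc k) = (real (2*k+2) * real (2*k+1)) * (fact (2*k) :: real)"
  proof -
    have "2 * Suc k = Suc (Suc (2*k))" by simp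
    then show ?thesis by (simp add: algebra_simps)
  qed
  have e: "hermite_prob (2 * Suc k) 0 ^ 2 / fact (2 * Suc k) = real (2*k+1) / real (2*k+2) * r"
    unfolding He_even_rec f r_def using aux_frac[of "fact (2*k)" "real (2*k+1)" "hermite_prob (2*k) 0"]
    by (simp add: add.commute add.left_commute)
  have ih: "r^2 * real (2*k+1) \<le> 1" using Suc.IH unfolding r_def .
  have "(real (2*k+1) / real (2*k+2) * r)^2 * real (2 * Suc k + 1)
      = (r^2 * real (2*k+1)) * (real (2*k+1) * real (2*k+3) / (real (2*k+2))^2)"
    by (simp add: power_mult_distrib power_divide field_simps power2_eq_square)
  also have "\<dots> \<le> 1 * 1"
  proof (rule mult_mono[OF ih])
    have "real (2*k+1) * real (2*k+3) \<le> (real (2*k+2))^2" by (simp add: power2_eq_square algebra_simps)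
    then show "real (2*k+1) * real (2*k+3) / (real (2*k+2))^2 \<le> 1" by simp
  qed auto
  finally show ?case unfolding e by simp
qed

lemma aux2: "(D::real) > 0 \<Longrightarrow> F > 0 \<Longrightarrow> E * (T * (D*H)^2) / (D*F) = E*T*(H^2/F*D)"
  by (simp add: power2_eq_square field_simps)

lemma hermite_bound:
  assumes d: "odd d" and t: "0 \<le> t" "t^2 \<le> 4 * real d + 2"
  shows "\<bar>hermite d t\<bar> \<le> real d powr (1/4) * t * exp (t^2/4)"
proof -
  obtain k where k: "d = 2*k+1" using d oddE by blast
  have d1: "d \<ge> 1" using k by simp
  have z: "hermite_prob d 0 = 0" using He_odd_zero k by simp
  have pw: "(uf d t)^2 \<le> t^2 * (real d * hermite_prob (2*k) 0)^2"
    using pointwise[OF d1 z t] k by simp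
  define a where "a = hermite_prob (2*k) 0 ^ 2 / fact (2*k)"
  have a0: "0 \<le> a" unfolding a_def by simp
  have wa: "a^2 * real d \<le> 1" using wallis[of k] k unfolding a_def by simp
  have dpos: "real d > 0" using d1 by simp
  have sq: "sqrt (real d) = (real d powr (1/4))^2"
    using dpos by (simp add: powr_power sqrt_def root_powr_inverse powr_half_sqrt[symmetric])
  have "(a * real d)^2 \<le> (sqrt (real d))^2"
  proof -
    have "(a * real d)^2 = (a^2 * real d) * real d" by (simp add: power2_eq_square)
    also have "\<dots> \<le> 1 * real d" using wa dpos by (intro mult_right_mono) auto
    finally show ?thesis using dpos by simp
  qed
  then have ad: "a * real d \<le> sqrt (real d)"
    by (rule power2_le_imp_le) auto
  have e2: "exp (-(t^2)/4) ^ 2 = exp (-(t^2)/2)"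
    by (simp add: exp_double[symmetric] power2_eq_square exp_add[symmetric])
  have e4: "exp (t^2/4) ^ 2 = exp (t^2/2)"
    by (simp add: power2_eq_square exp_add[symmetric])
  have He2: "(hermite_prob d t)^2 = exp (t^2/2) * (uf d t)^2"
  proof -
    have "exp (t^2/2) * (uf d t)^2 = (exp (t^2/2) * exp (-(t^2)/2)) * (hermite_prob d t)^2"
      unfolding uf_def power_mult_distrib e2 by (simp only: mult.assoc)
    also have "exp (t^2/2) * exp (-(t^2)/2) = 1" by (simp add: exp_add[symmetric])
    finally show ?thesis by simp
  qed
  have fd: "fact d = real d * (fact (2*k) :: real)" using k by simp
  have "(hermite d t)^2 = (hermite_prob d t)^2 / fact d"
    unfolding hermite_def by (simp add: power_divide)
  also have "\<dots> \<le> exp (t^2/2) * (t^2 * (real d * hermite_prob (2*k) 0)^2) / fact d"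
    unfolding He2 by (intro divide_right_mono mult_left_mono pw) auto
  also have "\<dots> = exp (t^2/2) * t^2 * (a * real d)"
    unfolding fd a_def using aux2[OF dpos fact_gt_zero] by simp
  also have "\<dots> \<le> exp (t^2/2) * t^2 * sqrt (real d)"
    by (intro mult_left_mono ad) auto
  also have "\<dots> = (real d powr (1/4) * t * exp (t^2/4))^2"
  proof -
    have "exp (t^2/4) ^ 2 = exp (t^2/2)"
      by (simp add: power2_eq_square exp_add[symmetric])
    then show ?thesis unfolding sq by (simp add: power_mult_distrib)
  qed
  finally have "(hermite d t)^2 \<le> (real d powr (1/4) * t * exp (t^2/4))^2" .
  then show ?thesis
  proof -
    have "0 \<le> real d powr (1/4) * t * exp (t^2/4)" using t by simp
    moreover note abs_le_square_iff[THEN iffD2, OF \<open>(hermite d t)^2 \<le> _\<close>]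
    ultimately show ?thesis by simp
  qed
qed

theorem lemmaA10:
  shows "\<exists>C::real. \<forall>(d::nat) (tau::real). odd d \<longrightarrow> 0 \<le> tau \<longrightarrow> tau \<le> real d powr (1/6) \<longrightarrow>
           integral {0..tau} (\<lambda>t. \<bar>hermite d t\<bar> / t) \<le> C * real d powr (1/4) * tau * exp (tau^2 / 4)"
proof (intro exI[of _ 1] allI impI)
  fix d :: nat and tau :: real
  assume d: "odd d" and t0: "0 \<le> tau" and t1: "tau \<le> real d powr (1/6)"
  have d1: "real d \<ge> 1" using d by (cases d) auto
  define c where "c = real d powr (1/4) * exp (tau^2/4)"
  have c0: "0 \<le> c" unfolding c_def by simp
  have tau2: "tau^2 \<le> 4 * real d + 2"
  proof -
    have "tau^2 \<le> (real d powr (1/6))^2" using t0 t1 by (intro power_mono) auto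
    also have "\<dots> = real d powr (1/3)" using d1 by (simp add: powr_power)
    also have "\<dots> \<le> real d powr 1" using d1 by (intro powr_mono) auto
    finally show ?thesis using d1 by simp
  qed
  have pt: "\<bar>hermite d t\<bar> / t \<le> c" if "t \<in> {0..tau}" for t
  proof (cases "t = 0")
    case True then show ?thesis using c0 by simp
  next
    case False
    with that have tp: "0 < t" "t \<le> tau" by auto
    have "t^2 \<le> tau^2" using tp by (intro power_mono) auto
    then have t2: "t^2 \<le> 4 * real d + 2" using tau2 by simp
    have "\<bar>hermite d t\<bar> \<le> real d powr (1/4) * t * exp (t^2/4)"
      using hermite_bound[OF d _ t2] tp by simp
    then have "\<bar>hermite d t\<bar> / t \<le> real d powr (1/4) * exp (t^2/4)"
      using tp by (simp add: divide_le_eq algebra_simps)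
    also have "\<dots> \<le> c" unfolding c_def
      using \<open>t^2 \<le> tau^2\<close> by (intro mult_left_mono) auto
    finally show ?thesis .
  qed
  show "integral {0..tau} (\<lambda>t. \<bar>hermite d t\<bar> / t) \<le> 1 * real d powr (1/4) * tau * exp (tau^2 / 4)"
  proof (cases "(\<lambda>t. \<bar>hermite d t\<bar> / t) integrable_on {0..tau}")
    case True
    have "integral {0..tau} (\<lambda>t. \<bar>hermite d t\<bar> / t) \<le> integral {0..tau} (\<lambda>t. c)"
      by (rule integral_le[OF True]) (use pt in auto)
    also have "\<dots> = tau * c" using t0 by simp
    finally show ?thesis unfolding c_def by (simp add: algebra_simps)
  next
    case False
    then show ?thesis using t0 by (simp add: not_integrable_integral)
  qed
qed

end
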